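(* Let $A\subseteq\Gamma$ be a finite set, $D=A-A$, $S=A+A$. Then for every integer $k\ge1$, $$\mathsf{E}^D_k(D)\ge|A^{k+1}-\Delta(A)|\ge|A-A|\,|A|^k,$$ $$\sum_xS(x)(S*D)^k(x)\ge|A^{k+1}+\Delta(A)|\ge|A|^k\max\{|A-A|,|A+A|\},$$ $$\mathsf{E}^D_k(S)\ge|A|^{k-1}|A^2+\Delta(A)|\ge|A|^k\max\{|A-A|,|A+A|\}.$$
   Context: $\Gamma$ is an abelian group; sets are identified with indicator functions. $(f*g)(x)=\sum_yf(y)g(x-y)$, $(f\circ g)(x)=\sum_yf(y)g(y+x)$. For a set $X$, $X_s=X\cap(X-s)$, and for $P\subseteq\Gamma$, $\mathsf{E}^P_k(X)=\sum_{s\in P}|X_s|^k=\sum_{s\in P}(X\circ X)(s)^k$. $A^{n}\pm\Delta(A)=\{(a_1\pm a,\dots,a_n\pm a): a_1,\dots,a_n,a\in A\}\subseteq\Gamma^n$. *)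

theory Defs
  imports Main
begin

text \<open>Sets are identified with their (natural-number valued) indicator functions.\<close>
definition ind :: "'a set \<Rightarrow> 'a \<Rightarrow> nat" where
  "ind X x = (if x \<in> X then 1 else 0)"

definition conv :: "('a::ab_group_add \<Rightarrow> nat) \<Rightarrow> ('a \<Rightarrow> nat) \<Rightarrow> 'a \<Rightarrow> nat" where
  "conv f g x = (\<Sum>y\<in>{y. f y \<noteq> 0}. f y * g (x - y))"

definition sumset :: "'a::ab_group_add set \<Rightarrow> 'a set \<Rightarrow> 'a set" where
  "sumset A B = {a + b | a b. a \<in> A \<and> b \<in> B}"

definition diffset :: "'a::ab_group_add set \<Rightarrow> 'a set \<Rightarrow> 'a set" where
  "diffset A B = {a - b | a b. a \<in> A \<and> b \<in> B}"

definition Xsec :: "'a::ab_group_add set \<Rightarrow> 'a \<Rightarrow> 'a set" where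
  "Xsec X s = X \<inter> ((\<lambda>x. x - s) ` X)"

definition Ek :: "'a::ab_group_add set \<Rightarrow> nat \<Rightarrow> 'a set \<Rightarrow> nat" where
  "Ek P k X = (\<Sum>s\<in>P. card (Xsec X s) ^ k)"

definition tuples_plus_diag :: "'a::ab_group_add set \<Rightarrow> nat \<Rightarrow> 'a list set" where
  "tuples_plus_diag A n =
     {map (\<lambda>x. x + a) xs | xs a. length xs = n \<and> set xs \<subseteq> A \<and> a \<in> A}"

definition tuples_minus_diag :: "'a::ab_group_add set \<Rightarrow> nat \<Rightarrow> 'a list set" where
  "tuples_minus_diag A n =
     {map (\<lambda>x. x - a) xs | xs a. length xs = n \<and> set xs \<subseteq> A \<and> a \<in> A}"

end

theory Submission imports Defs begin

definition LL :: "'b set \<Rightarrow> nat \<Rightarrow> 'b list set" where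
  "LL A n = {xs. set xs \<subseteq> A \<and> length xs = n}"

lemma LL_card: "finite A \<Longrightarrow> card (LL A n) = card A ^ n"
  unfolding LL_def by (rule card_lists_length_eq)
lemma LL_fin: "finite A \<Longrightarrow> finite (LL A n)"
  unfolding LL_def by (rule finite_lists_length_eq)

lemma tm_fin: "finite A \<Longrightarrow> finite (tuples_minus_diag A n)"
proof -
  assume f: "finite A"
  have "tuples_minus_diag A n = (\<lambda>(xs,a). map (\<lambda>x. x - a) xs) ` (LL A n \<times> A)"
    unfolding tuples_minus_diag_def LL_def by auto
  thus ?thesis using f LL_fin[OF f, of n] by simp
qed

lemma tp_fin: "finite A \<Longrightarrow> finite (tuples_plus_diag A n)"
proof -
  assume f: "finite A"
  have "tuples_plus_diag A n = (\<lambda>(xs,a). map (\<lambda>x. x + a) xs) ` (LL A n \<times> A)"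
    unfolding tuples_plus_diag_def LL_def by auto
  thus ?thesis using f LL_fin[OF f, of n] by simp
qed

lemma map_minus_inj: "map (\<lambda>x. x - (c::'a::ab_group_add)) xs = map (\<lambda>x. x - c) ys \<Longrightarrow> xs = ys"
proof -
  assume h: "map (\<lambda>x. x - c) xs = map (\<lambda>x. x - c) ys"
  have "inj (\<lambda>x. x - c)" by (rule injI) simp
  thus ?thesis using h by (simp add: inj_map_eq_map)
qed

lemma map_plus_inj: "map (\<lambda>x. x + (c::'a::ab_group_add)) xs = map (\<lambda>x. x + c) ys \<Longrightarrow> xs = ys"
proof -
  assume h: "map (\<lambda>x. x + c) xs = map (\<lambda>x. x + c) ys"
  have "inj (\<lambda>x. x + c)" by (rule injI) simp
  thus ?thesis using h by (simp add: inj_map_eq_map)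
qed

lemma diff_choice:
  obtains p q where "\<And>d. d \<in> diffset A A \<Longrightarrow> p d \<in> A \<and> q d \<in> A \<and> d = p d - q d"
proof -
  have "\<forall>d\<in>diffset A A. \<exists>pq. fst pq \<in> A \<and> snd pq \<in> A \<and> d = fst pq - snd pq"
    unfolding diffset_def by fastforce
  then obtain f where "\<forall>d\<in>diffset A A. fst (f d) \<in> A \<and> snd (f d) \<in> A \<and> d = fst (f d) - snd (f d)"
    by metis
  thus ?thesis using that[of "\<lambda>d. fst (f d)" "\<lambda>d. snd (f d)"] by blast
qed

lemma sum_choice:
  obtains p q where "\<And>d. d \<in> sumset A A \<Longrightarrow> p d \<in> A \<and> q d \<in> A \<and> d = p d + q d"
proof -
  have "\<forall>d\<in>sumset A A. \<exists>pq. fst pq \<in> A \<and> snd pq \<in> A \<and> d = fst pq + snd pq"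
    unfolding sumset_def by fastforce
  then obtain f where "\<forall>d\<in>sumset A A. fst (f d) \<in> A \<and> snd (f d) \<in> A \<and> d = fst (f d) + snd (f d)"
    by metis
  thus ?thesis using that[of "\<lambda>d. fst (f d)" "\<lambda>d. snd (f d)"] by blast
qed

lemma tm_lower:
  fixes A :: "'a::ab_group_add set"
  assumes f: "finite A"
  shows "card (diffset A A) * card A ^ k \<le> card (tuples_minus_diag A (k+1))"
proof -
  obtain p q where pq: "\<And>d. d \<in> diffset A A \<Longrightarrow> p d \<in> A \<and> q d \<in> A \<and> d = p d - q d"
    using diff_choice by blast
  let ?g = "\<lambda>(d, cs). map (\<lambda>x. x - q d) (p d # cs)"
  have inj: "inj_on ?g (diffset A A \<times> LL A k)"
  proof (rule inj_onI)
    fix x y assume x: "x \<in> diffset A A \<times> LL A k" and y: "y \<in> diffset A A \<times> LL A k"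
      and e0: "?g x = ?g y"
    obtain d cs where xe: "x = (d,cs)" by (cases x)
    obtain d' cs' where ye: "y = (d',cs')" by (cases y)
    have d: "d \<in> diffset A A" and d': "d' \<in> diffset A A" using x y xe ye by auto
    have e: "?g (d, cs) = ?g (d', cs')" using e0 xe ye by simp
    have h1: "hd (?g (d, cs)) = d" using pq[OF d] by simp
    have h2: "hd (?g (d', cs')) = d'" using pq[OF d'] by simp
    have "d = d'" using e h1 h2 by simp
    moreover have "map (\<lambda>x. x - q d) cs = map (\<lambda>x. x - q d') cs'" using e by simp
    ultimately show "x = y" using map_minus_inj xe ye by blast
  qed
  have sub: "?g ` (diffset A A \<times> LL A k) \<subseteq> tuples_minus_diag A (k+1)"
    unfolding tuples_minus_diag_def LL_def
  proof clarify
    fix d cs assume d: "d \<in> diffset A A" and "set cs \<subseteq> A" "k = length cs"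
    thus "\<exists>xs a. map (\<lambda>x. x - q d) (p d # cs) = map (\<lambda>x. x - a) xs \<and> length xs = length cs + 1 \<and> set xs \<subseteq> A \<and> a \<in> A"
      using pq[OF d] by (intro exI[of _ "p d # cs"] exI[of _ "q d"]) auto
  qed
  have "card (diffset A A) * card A ^ k = card (diffset A A \<times> LL A k)"
    by (simp add: card_cartesian_product LL_card f)
  also have "\<dots> = card (?g ` (diffset A A \<times> LL A k))" using card_image[OF inj] by simp
  also have "\<dots> \<le> card (tuples_minus_diag A (k+1))" by (rule card_mono[OF tm_fin[OF f] sub])
  finally show ?thesis .
qed

lemma tp_lower_S:
  fixes A :: "'a::ab_group_add set"
  assumes f: "finite A"
  shows "card (sumset A A) * card A ^ k \<le> card (tuples_plus_diag A (k+1))"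
proof -
  obtain p q where pq: "\<And>d. d \<in> sumset A A \<Longrightarrow> p d \<in> A \<and> q d \<in> A \<and> d = p d + q d"
    using sum_choice by blast
  let ?g = "\<lambda>(d, cs). map (\<lambda>x. x + q d) (p d # cs)"
  have inj: "inj_on ?g (sumset A A \<times> LL A k)"
  proof (rule inj_onI)
    fix x y assume x: "x \<in> sumset A A \<times> LL A k" and y: "y \<in> sumset A A \<times> LL A k"
      and e0: "?g x = ?g y"
    obtain d cs where xe: "x = (d,cs)" by (cases x)
    obtain d' cs' where ye: "y = (d',cs')" by (cases y)
    have d: "d \<in> sumset A A" and d': "d' \<in> sumset A A" using x y xe ye by auto
    have e: "?g (d, cs) = ?g (d', cs')" using e0 xe ye by simp
    have h1: "hd (?g (d, cs)) = d" using pq[OF d] by simp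
    have h2: "hd (?g (d', cs')) = d'" using pq[OF d'] by simp
    have "d = d'" using e h1 h2 by simp
    moreover have "map (\<lambda>x. x + q d) cs = map (\<lambda>x. x + q d') cs'" using e by simp
    ultimately show "x = y" using map_plus_inj xe ye by blast
  qed
  have sub: "?g ` (sumset A A \<times> LL A k) \<subseteq> tuples_plus_diag A (k+1)"
    unfolding tuples_plus_diag_def LL_def
  proof clarify
    fix d cs assume d: "d \<in> sumset A A" and "set cs \<subseteq> A" "k = length cs"
    thus "\<exists>xs a. map (\<lambda>x. x + q d) (p d # cs) = map (\<lambda>x. x + a) xs \<and> length xs = length cs + 1 \<and> set xs \<subseteq> A \<and> a \<in> A"
      using pq[OF d] by (intro exI[of _ "p d # cs"] exI[of _ "q d"]) auto
  qed
  have "card (sumset A A) * card A ^ k = card (sumset A A \<times> LL A k)"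
    by (simp add: card_cartesian_product LL_card f)
  also have "\<dots> = card (?g ` (sumset A A \<times> LL A k))" using card_image[OF inj] by simp
  also have "\<dots> \<le> card (tuples_plus_diag A (k+1))" by (rule card_mono[OF tp_fin[OF f] sub])
  finally show ?thesis .
qed

lemma tp_lower_D:
  fixes A :: "'a::ab_group_add set"
  assumes f: "finite A" and k: "k \<ge> 1"
  shows "card (diffset A A) * card A ^ k \<le> card (tuples_plus_diag A (k+1))"
proof -
  obtain p q where pq: "\<And>d. d \<in> diffset A A \<Longrightarrow> p d \<in> A \<and> q d \<in> A \<and> d = p d - q d"
    using diff_choice by blast
  let ?g = "\<lambda>(d, a, cs). map (\<lambda>x. x + a) (p d # q d # cs)"
  let ?M = "diffset A A \<times> A \<times> LL A (k - 1)"
  have inj: "inj_on ?g ?M"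
  proof (rule inj_onI)
    fix x y assume x: "x \<in> ?M" and y: "y \<in> ?M"
      and e0: "?g x = ?g y"
    obtain d a cs where xe: "x = (d,a,cs)" by (cases x) auto
    obtain d' a' cs' where ye: "y = (d',a',cs')" by (cases y) auto
    have d: "d \<in> diffset A A" and d': "d' \<in> diffset A A" using x y xe ye by auto
    have e: "?g (d, a, cs) = ?g (d', a', cs')" using e0 xe ye by simp
    have h1: "hd (?g (d, a, cs)) - hd (tl (?g (d, a, cs))) = d" using pq[OF d] by simp
    have h2: "hd (?g (d', a', cs')) - hd (tl (?g (d', a', cs'))) = d'" using pq[OF d'] by simp
    have dd: "d = d'" using e h1 h2 by simp
    have "p d + a = p d' + a'" using e by simp
    hence aa: "a = a'" using dd by simp
    moreover have "map (\<lambda>x. x + a) cs = map (\<lambda>x. x + a') cs'" using e by simp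
    ultimately show "x = y" using map_plus_inj xe ye dd by blast
  qed
  have sub: "?g ` ?M \<subseteq> tuples_plus_diag A (k+1)"
  proof
    fix z assume "z \<in> ?g ` ?M"
    then obtain d a cs where z: "z = ?g (d, a, cs)" and d: "d \<in> diffset A A" and a: "a \<in> A"
      and cs: "set cs \<subseteq> A" "length cs = k - 1" unfolding LL_def by auto
    show "z \<in> tuples_plus_diag A (k+1)" unfolding tuples_plus_diag_def
      using pq[OF d] k z a cs by (intro CollectI exI[of _ "p d # q d # cs"] exI[of _ a]) auto
  qed
  have "card (diffset A A) * card A ^ k = card (diffset A A) * (card A * card A ^ (k - 1))"
    using k by (metis Suc_diff_le diff_Suc_1 power_Suc)
  also have "\<dots> = card ?M"
    by (simp add: card_cartesian_product LL_card f)
  also have "\<dots> = card (?g ` ?M)" using card_image[OF inj] by simp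
  also have "\<dots> \<le> card (tuples_plus_diag A (k+1))" by (rule card_mono[OF tp_fin[OF f] sub])
  finally show ?thesis .
qed

lemma diff_fin: "finite A \<Longrightarrow> finite (diffset A A)"
proof -
  assume f: "finite A"
  have "diffset A A = (\<lambda>(a,b). a - b) ` (A \<times> A)" unfolding diffset_def by auto
  thus ?thesis using f by simp
qed

lemma sum_fin: "finite A \<Longrightarrow> finite (sumset A A)"
proof -
  assume f: "finite A"
  have "sumset A A = (\<lambda>(a,b). a + b) ` (A \<times> A)" unfolding sumset_def by auto
  thus ?thesis using f by simp
qed

lemma claim1:
  fixes A :: "'a::ab_group_add set"
  assumes f: "finite A"
  shows "card (tuples_minus_diag A (k+1)) \<le> Ek (diffset A A) k (diffset A A)"
proof -
  let ?D = "diffset A A"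
  let ?h = "\<lambda>t. (hd t, map (\<lambda>x. x - hd t) (tl t))"
  let ?Sg = "Sigma ?D (\<lambda>s. LL (Xsec ?D s) k)"
  have inj: "inj_on ?h (tuples_minus_diag A (k+1))"
  proof (rule inj_onI)
    fix x y assume x: "x \<in> tuples_minus_diag A (k+1)" and y: "y \<in> tuples_minus_diag A (k+1)"
      and e: "?h x = ?h y"
    have "x \<noteq> []" "y \<noteq> []" using x y unfolding tuples_minus_diag_def by auto
    moreover have "hd x = hd y" using e by simp
    moreover have "tl x = tl y" using e map_minus_inj by auto
    ultimately show "x = y" by (metis list.collapse)
  qed
  have sub: "?h ` tuples_minus_diag A (k+1) \<subseteq> ?Sg"
  proof
    fix z assume "z \<in> ?h ` tuples_minus_diag A (k+1)"
    then obtain xs a where z: "z = ?h (map (\<lambda>x. x - a) xs)" and l: "length xs = k+1"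
      and xs: "set xs \<subseteq> A" and a: "a \<in> A"
      unfolding tuples_minus_diag_def by auto
    obtain b bs where xsb: "xs = b # bs" using l by (cases xs) auto
    have b: "b \<in> A" and bs: "set bs \<subseteq> A" using xs xsb by auto
    have "b - a \<in> ?D" using a b unfolding diffset_def by auto
    moreover have "map (\<lambda>x. x - (b - a)) (map (\<lambda>x. x - a) bs) \<in> LL (Xsec ?D (b - a)) k"
      unfolding LL_def Xsec_def
    proof (intro CollectI conjI subsetI)
      fix y assume "y \<in> set (map (\<lambda>x. x - (b - a)) (map (\<lambda>x. x - a) bs))"
      then obtain c where c: "c \<in> set bs" and y: "y = c - a - (b - a)" by auto
      have cA: "c \<in> A" using c bs by auto
      have "y = c - b" using y by (simp add: algebra_simps)
      hence "y \<in> ?D" using cA b unfolding diffset_def by auto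
      moreover have ca: "c - a \<in> ?D" using cA a unfolding diffset_def by auto
      have "y \<in> (\<lambda>x. x - (b - a)) ` ?D" using y ca
        by (intro image_eqI[of _ _ "c - a"]) (simp_all add: algebra_simps)
      ultimately show "y \<in> ?D \<inter> (\<lambda>x. x - (b - a)) ` ?D" by auto
    next
      show "length (map (\<lambda>x. x - (b - a)) (map (\<lambda>x. x - a) bs)) = k" using l xsb by simp
    qed
    ultimately show "z \<in> ?Sg" using z xsb by simp
  qed
  have fD: "finite ?D" by (rule diff_fin[OF f])
  have fX: "\<And>s. finite (Xsec ?D s)" unfolding Xsec_def using fD by simp
  have "card (tuples_minus_diag A (k+1)) = card (?h ` tuples_minus_diag A (k+1))"
    using card_image[OF inj] by simp
  also have "\<dots> \<le> card ?Sg"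
    by (rule card_mono[OF _ sub]) (simp add: fD LL_fin fX)
  also have "\<dots> = (\<Sum>s\<in>?D. card (LL (Xsec ?D s) k))"
    by (simp add: fD LL_fin fX)
  also have "\<dots> = Ek ?D k ?D" unfolding Ek_def by (simp add: LL_card fX)
  finally show ?thesis .
qed

lemma conv_eq:
  fixes S D :: "'a::ab_group_add set"
  assumes fS: "finite S"
  shows "conv (ind S) (ind D) x = card {y\<in>S. x - y \<in> D}"
proof -
  have e: "{y. ind S y \<noteq> 0} = S" unfolding ind_def by auto
  have "conv (ind S) (ind D) x = (\<Sum>y\<in>S. ind D (x - y))"
    unfolding conv_def e by (intro sum.cong) (auto simp: ind_def)
  also have "\<dots> = (\<Sum>y\<in>S. if x - y \<in> D then 1 else 0)" unfolding ind_def by simp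
  also have "\<dots> = card {y\<in>S. x - y \<in> D}"
    using fS by (simp add: sum.If_cases Int_def)
  finally show ?thesis .
qed

lemma claim3:
  fixes A :: "'a::ab_group_add set"
  assumes f: "finite A"
  defines "D \<equiv> diffset A A" and "S \<equiv> sumset A A"
  shows "card (tuples_plus_diag A (k+1)) \<le> (\<Sum>x\<in>S. ind S x * conv (ind S) (ind D) x ^ k)"
proof -
  let ?h = "\<lambda>t. (hd t, tl t)"
  let ?Sg = "Sigma S (\<lambda>x. LL {y\<in>S. x - y \<in> D} k)"
  have fS: "finite S" unfolding S_def by (rule sum_fin[OF f])
  have inj: "inj_on ?h (tuples_plus_diag A (k+1))"
  proof (rule inj_onI)
    fix x y assume x: "x \<in> tuples_plus_diag A (k+1)" and y: "y \<in> tuples_plus_diag A (k+1)"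
      and e: "?h x = ?h y"
    have "x \<noteq> []" "y \<noteq> []" using x y unfolding tuples_plus_diag_def by auto
    thus "x = y" using e by (metis list.collapse prod.inject)
  qed
  have sub: "?h ` tuples_plus_diag A (k+1) \<subseteq> ?Sg"
  proof
    fix z assume "z \<in> ?h ` tuples_plus_diag A (k+1)"
    then obtain xs a where z: "z = ?h (map (\<lambda>x. x + a) xs)" and l: "length xs = k+1"
      and xs: "set xs \<subseteq> A" and a: "a \<in> A"
      unfolding tuples_plus_diag_def by auto
    obtain b bs where xsb: "xs = b # bs" using l by (cases xs) auto
    have b: "b \<in> A" and bs: "set bs \<subseteq> A" using xs xsb by auto
    have "b + a \<in> S" using a b unfolding S_def sumset_def by auto
    moreover have "map (\<lambda>x. x + a) bs \<in> LL {y\<in>S. (b + a) - y \<in> D} k"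
      unfolding LL_def
    proof (rule CollectI, rule conjI, rule subsetI)
      fix y assume "y \<in> set (map (\<lambda>x. x + a) bs)"
      then obtain c where c: "c \<in> set bs" and y: "y = c + a" by auto
      have cA: "c \<in> A" using c bs by auto
      have "y \<in> S" using cA a y unfolding S_def sumset_def by auto
      moreover have "(b + a) - y = b - c" using y by (simp add: algebra_simps)
      moreover have "b - c \<in> D" using cA b unfolding D_def diffset_def by auto
      ultimately show "y \<in> {y\<in>S. (b + a) - y \<in> D}" by (metis (no_types, lifting) mem_Collect_eq)
    next
      show "length (map (\<lambda>x. x + a) bs) = k" using l xsb by simp
    qed
    ultimately show "z \<in> ?Sg" using z xsb by simp
  qed
  have fX: "\<And>x. finite {y\<in>S. x - y \<in> D}" using fS by simp
  have "card (tuples_plus_diag A (k+1)) = card (?h ` tuples_plus_diag A (k+1))"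
    using card_image[OF inj] by simp
  also have "\<dots> \<le> card ?Sg"
    by (rule card_mono[OF _ sub]) (simp add: fS LL_fin fX)
  also have "\<dots> = (\<Sum>x\<in>S. card (LL {y\<in>S. x - y \<in> D} k))"
    by (simp add: fS LL_fin fX)
  also have "\<dots> = (\<Sum>x\<in>S. ind S x * conv (ind S) (ind D) x ^ k)"
    by (intro sum.cong) (simp_all add: LL_card fX conv_eq[OF fS] ind_def)
  finally show ?thesis .
qed

lemma claim5:
  fixes A :: "'a::ab_group_add set"
  assumes f: "finite A" and k: "k \<ge> 1"
  defines "D \<equiv> diffset A A" and "S \<equiv> sumset A A"
  shows "card A ^ (k - 1) * card (tuples_plus_diag A 2) \<le> Ek D k S"
proof -
  let ?P = "tuples_plus_diag A 2"
  define T where "T s = {x. [x, x + s] \<in> ?P}" for s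
  obtain p q where pq: "\<And>d. d \<in> D \<Longrightarrow> p d \<in> A \<and> q d \<in> A \<and> d = p d - q d"
    using diff_choice unfolding D_def by blast
  have fS: "finite S" unfolding S_def by (rule sum_fin[OF f])
  have fD: "finite D" unfolding D_def by (rule diff_fin[OF f])
  have TX: "T s \<subseteq> Xsec S s" for s
  proof
    fix x assume "x \<in> T s"
    hence "[x, x + s] \<in> ?P" by (simp add: T_def)
    then obtain a z where a: "a \<in> A" and x1: "x = z + a" and z: "z \<in> A" and zs: "z + s \<in> A"
      unfolding tuples_plus_diag_def by auto
    have "x \<in> S" using x1 z a unfolding S_def sumset_def by auto
    moreover have xs: "x + s = (z + s) + a" using x1 by (simp add: algebra_simps)
    have "x + s \<in> S" unfolding S_def sumset_def using zs a xs by blast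
    hence "x \<in> (\<lambda>x. x - s) ` S" by (intro image_eqI[of _ _ "x + s"]) simp_all
    ultimately show "x \<in> Xsec S s" unfolding Xsec_def by auto
  qed
  have fX: "finite (Xsec S s)" for s unfolding Xsec_def using fS by simp
  have fT: "finite (T s)" for s using TX fX finite_subset by metis
  have TA: "card A \<le> card (T s)" if s: "s \<in> D" for s
  proof -
    have "inj_on (\<lambda>a. q s + a) A" by (rule inj_onI) simp
    moreover have "(\<lambda>a. q s + a) ` A \<subseteq> T s"
    proof
      fix x assume "x \<in> (\<lambda>a. q s + a) ` A"
      then obtain a where a: "a \<in> A" and x: "x = q s + a" by auto
      have "[x, x + s] = map (\<lambda>y. y + a) [q s, p s]"
        using x pq[OF s] by (simp add: algebra_simps)
      thus "x \<in> T s" unfolding T_def tuples_plus_diag_def using pq[OF s] a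
        by (intro CollectI exI[of _ "[q s, p s]"] exI[of _ a]) auto
    qed
    ultimately show ?thesis using card_inj_on_le fT by metis
  qed
  have Psub: "?P \<subseteq> (\<lambda>(s, x). [x, x + s]) ` Sigma D T"
  proof
    fix t assume t: "t \<in> ?P"
    then obtain xs a where te: "t = map (\<lambda>x. x + a) xs" and l: "length xs = 2"
      and xs: "set xs \<subseteq> A" and a: "a \<in> A" unfolding tuples_plus_diag_def by auto
    obtain b c where xsb: "xs = [b, c]" using l
      by (metis One_nat_def Suc_1 length_0_conv length_Suc_conv)
    have "c - b \<in> D" using xs xsb unfolding D_def diffset_def by auto
    moreover have tt: "t = [b + a, (b + a) + (c - b)]" using te xsb by (simp add: algebra_simps)
    moreover have "b + a \<in> T (c - b)" unfolding T_def using t tt by (metis mem_Collect_eq)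
    ultimately show "t \<in> (\<lambda>(s, x). [x, x + s]) ` Sigma D T"
      by (intro image_eqI[of _ _ "(c - b, b + a)"]) auto
  qed
  have "card ?P \<le> card ((\<lambda>(s, x). [x, x + s]) ` Sigma D T)"
    by (rule card_mono[OF _ Psub]) (simp add: fD fT)
  also have "\<dots> \<le> card (Sigma D T)" by (rule card_image_le) (simp add: fD fT)
  also have "\<dots> = (\<Sum>s\<in>D. card (T s))" by (simp add: fD fT)
  finally have cP: "card ?P \<le> (\<Sum>s\<in>D. card (T s))" .
  have "card A ^ (k - 1) * card ?P \<le> card A ^ (k - 1) * (\<Sum>s\<in>D. card (T s))"
    using cP by simp
  also have "\<dots> = (\<Sum>s\<in>D. card (T s) * card A ^ (k - 1))"
    by (simp only: mult.commute[of "card A ^ (k - 1)"] sum_distrib_right)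
  also have "\<dots> \<le> (\<Sum>s\<in>D. card (Xsec S s) ^ k)"
  proof (rule sum_mono)
    fix s assume s: "s \<in> D"
    have c1: "card (T s) \<le> card (Xsec S s)" by (rule card_mono[OF fX TX])
    have c2: "card A ^ (k - 1) \<le> card (Xsec S s) ^ (k - 1)"
      using TA[OF s] c1 by (intro power_mono) simp_all
    have "card (T s) * card A ^ (k - 1) \<le> card (Xsec S s) * card (Xsec S s) ^ (k - 1)"
      using c1 c2 by (rule mult_le_mono)
    also have "\<dots> = card (Xsec S s) ^ k" using k
      by (metis Suc_diff_le diff_Suc_1 power_Suc)
    finally show "card (T s) * card A ^ (k - 1) \<le> card (Xsec S s) ^ k" .
  qed
  also have "\<dots> = Ek D k S" unfolding Ek_def ..
  finally show ?thesis .
qed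

theorem proposition5:
  fixes A :: "'a::ab_group_add set" and k :: nat
  assumes "finite A" and "k \<ge> 1"
  defines "D \<equiv> diffset A A" and "S \<equiv> sumset A A"
  shows "Ek D k D \<ge> card (tuples_minus_diag A (k + 1))
       \<and> card (tuples_minus_diag A (k + 1)) \<ge> card D * card A ^ k
       \<and> (\<Sum>x\<in>S. ind S x * conv (ind S) (ind D) x ^ k) \<ge> card (tuples_plus_diag A (k + 1))
       \<and> card (tuples_plus_diag A (k + 1)) \<ge> card A ^ k * max (card D) (card S)
       \<and> Ek D k S \<ge> card A ^ (k - 1) * card (tuples_plus_diag A 2)
       \<and> card A ^ (k - 1) * card (tuples_plus_diag A 2) \<ge> card A ^ k * max (card D) (card S)"
proof -
  have c1: "Ek D k D \<ge> card (tuples_minus_diag A (k + 1))"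
    unfolding D_def by (rule claim1[OF assms(1)])
  have c2: "card (tuples_minus_diag A (k + 1)) \<ge> card D * card A ^ k"
    unfolding D_def by (rule tm_lower[OF assms(1)])
  have c3: "(\<Sum>x\<in>S. ind S x * conv (ind S) (ind D) x ^ k) \<ge> card (tuples_plus_diag A (k + 1))"
    unfolding D_def S_def by (rule claim3[OF assms(1)])
  have mx: "card A ^ j * max (card D) (card S) \<le> card (tuples_plus_diag A (j + 1))"
    if j: "j \<ge> 1" for j
  proof -
    have "card D * card A ^ j \<le> card (tuples_plus_diag A (j+1))"
      unfolding D_def by (rule tp_lower_D[OF assms(1) j])
    moreover have "card S * card A ^ j \<le> card (tuples_plus_diag A (j+1))"
      unfolding S_def by (rule tp_lower_S[OF assms(1)])
    ultimately show ?thesis by (simp only: max_def mult.commute split: if_split) simp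
  qed
  have c4: "card (tuples_plus_diag A (k + 1)) \<ge> card A ^ k * max (card D) (card S)"
    by (rule mx[OF assms(2)])
  have c5: "Ek D k S \<ge> card A ^ (k - 1) * card (tuples_plus_diag A 2)"
    unfolding D_def S_def by (rule claim5[OF assms(1,2)])
  have m1: "card A ^ 1 * max (card D) (card S) \<le> card (tuples_plus_diag A 2)"
    using mx[of 1] by (simp only: one_add_one order_refl)
  have pk: "card A ^ k = card A ^ (k - 1) * card A ^ 1"
    using assms(2) by (cases k) simp_all
  have "card A ^ k * max (card D) (card S) = card A ^ (k - 1) * (card A ^ 1 * max (card D) (card S))"
    unfolding pk by (simp only: mult.assoc)
  also have "\<dots> \<le> card A ^ (k - 1) * card (tuples_plus_diag A 2)"
    using m1 by (rule mult_le_mono2)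
  finally have c6: "card A ^ (k - 1) * card (tuples_plus_diag A 2) \<ge> card A ^ k * max (card D) (card S)" .
  show ?thesis using c1 c2 c3 c4 c5 c6 by (intro conjI)
qed

end
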